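(* Let $\theta$ be the parameters of an Elman RNN with $L$ layers such that every bias vector $\mathbf{b}^\ell$ ($0\le\ell\le L-1$) has all entries nonzero. Define $$\|\theta\|_2^2=\|\mathbf{W}_{\mathrm{ff}}^{L-1}\|_F^2+\|\mathbf{b}^{L-1}\|^2+\sum_{0<\ell<L}\left(\|\mathbf{W}_{\mathrm{rec}}^{\ell}\|_F^2+\|\mathbf{W}_{\mathrm{ff}}^{\ell-1}\|_F^2+\|\mathbf{b}^{\ell-1}\|^2\right),$$ and let $\mathcal{X}(\theta)$ be the set of $\theta'$ that minimize $\|\theta'\|_2$ subject to $\theta'=\mathcal{P}(\theta)$ for some $\mathcal{P}\in\mathcal{G}_{\mathrm{scaled}}$. Then for every $\theta',\theta''\in\mathcal{X}(\theta)$ there exists $\mathcal{P}\in\mathcal{G}_{\mathrm{perm}}$ (a transformation by unscaled permutations only) such that $\theta'=\mathcal{P}(\theta'')$.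
   Context: Elman RNN: parameters $\theta=(\mathbf{W}_{\mathrm{rec}}^{\ell+1},\mathbf{W}_{\mathrm{ff}}^{\ell},\mathbf{b}^{\ell})_{0\le\ell\le L-1}$ with $\mathbf{W}_{\mathrm{ff}}^{\ell}\in\mathbb{R}^{d_{\ell+1}\times d_\ell}$, $\mathbf{W}_{\mathrm{rec}}^{\ell+1}\in\mathbb{R}^{d_{\ell+1}\times d_{\ell+1}}$, $\mathbf{b}^\ell\in\mathbb{R}^{d_{\ell+1}}$. $\mathcal{G}_{\mathrm{lin}}$ is the set of sequences $\mathcal{P}=(\mathbf{P}^0,\dots,\mathbf{P}^L)$ with $\mathbf{P}^0=\mathbf{I}_{d_0}$, $\mathbf{P}^L=\mathbf{I}_{d_L}$ and $\mathbf{P}^\ell$ invertible $d_\ell\times d_\ell$ for $1\le\ell\le L-1$; it acts on $\theta$ by replacing, for each $1\le\ell\le L$, $(\mathbf{W}_{\mathrm{rec}}^{\ell},\mathbf{W}_{\mathrm{ff}}^{\ell-1},\mathbf{b}^{\ell-1})$ with $(\mathbf{P}^\ell\mathbf{W}_{\mathrm{rec}}^{\ell}(\mathbf{P}^\ell)^{-1},\ \mathbf{P}^\ell\mathbf{W}_{\mathrm{ff}}^{\ell-1}(\mathbf{P}^{\ell-1})^{-1},\ \mathbf{P}^\ell\mathbf{b}^{\ell-1})$, giving $\mathcal{P}(\theta)$. $\mathcal{G}_{\mathrm{perm}}\subset\mathcal{G}_{\mathrm{lin}}$: all $\mathbf{P}^\ell$ ($1\le\ell\le L-1$) are permutation matrices.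 $\mathcal{G}_{\mathrm{scaled}}\subset\mathcal{G}_{\mathrm{lin}}$: each $\mathbf{P}^\ell=\tilde{\mathbf{P}}^\ell\mathbf{D}^\ell$ with $\tilde{\mathbf{P}}^\ell$ a permutation matrix and $\mathbf{D}^\ell$ diagonal with strictly positive diagonal entries. *)

theory Defs
  imports "Jordan_Normal_Form.Determinant"
begin

text \<open>Parameters of an Elman RNN: for each layer index l, the recurrent matrix
  Wrec l (used for 1 <= l <= L), the feedforward matrix Wff l and the bias bias l
  (used for 0 <= l <= L-1).\<close>

record rnn_params =
  Wrec :: "nat \<Rightarrow> real mat"
  Wff  :: "nat \<Rightarrow> real mat"
  bias :: "nat \<Rightarrow> real vec"

definition rnn_wf :: "nat \<Rightarrow> (nat \<Rightarrow> nat) \<Rightarrow> rnn_params \<Rightarrow> bool" where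
  "rnn_wf L d \<theta> \<longleftrightarrow>
     (\<forall>l. 1 \<le> l \<and> l \<le> L \<longrightarrow> Wrec \<theta> l \<in> carrier_mat (d l) (d l)) \<and>
     (\<forall>l<L. Wff \<theta> l \<in> carrier_mat (d (Suc l)) (d l) \<and> bias \<theta> l \<in> carrier_vec (d (Suc l)))"

definition inv_mat :: "real mat \<Rightarrow> real mat" where
  "inv_mat A = (SOME B. inverts_mat A B \<and> inverts_mat B A)"

definition rnn_act :: "nat \<Rightarrow> (nat \<Rightarrow> real mat) \<Rightarrow> rnn_params \<Rightarrow> rnn_params" where
  "rnn_act L P \<theta> =
     \<lparr> Wrec = (\<lambda>l. if 1 \<le> l \<and> l \<le> L then P l * Wrec \<theta> l * inv_mat (P l) else Wrec \<theta> l),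
       Wff  = (\<lambda>l. if l < L then P (Suc l) * Wff \<theta> l * inv_mat (P l) else Wff \<theta> l),
       bias = (\<lambda>l. if l < L then P (Suc l) *\<^sub>v bias \<theta> l else bias \<theta> l) \<rparr>"

definition G_lin :: "nat \<Rightarrow> (nat \<Rightarrow> nat) \<Rightarrow> (nat \<Rightarrow> real mat) set" where
  "G_lin L d = {P. P 0 = 1\<^sub>m (d 0) \<and> P L = 1\<^sub>m (d L) \<and>
      (\<forall>l. 1 \<le> l \<and> l < L \<longrightarrow> P l \<in> carrier_mat (d l) (d l) \<and> invertible_mat (P l))}"

definition perm_matrix :: "nat \<Rightarrow> real mat \<Rightarrow> bool" where
  "perm_matrix n Q \<longleftrightarrow> (\<exists>\<sigma>. \<sigma> permutes {..<n} \<and>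
      Q = mat n n (\<lambda>(i, j). if i = \<sigma> j then 1 else 0))"

definition pos_diag_matrix :: "nat \<Rightarrow> real mat \<Rightarrow> bool" where
  "pos_diag_matrix n D \<longleftrightarrow> D \<in> carrier_mat n n \<and> diagonal_mat D \<and> (\<forall>i<n. D $$ (i, i) > 0)"

definition G_perm :: "nat \<Rightarrow> (nat \<Rightarrow> nat) \<Rightarrow> (nat \<Rightarrow> real mat) set" where
  "G_perm L d = {P \<in> G_lin L d. \<forall>l. 1 \<le> l \<and> l < L \<longrightarrow> perm_matrix (d l) (P l)}"

definition G_scaled :: "nat \<Rightarrow> (nat \<Rightarrow> nat) \<Rightarrow> (nat \<Rightarrow> real mat) set" where
  "G_scaled L d = {P \<in> G_lin L d. \<forall>l. 1 \<le> l \<and> l < L \<longrightarrow>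
      (\<exists>Q D. perm_matrix (d l) Q \<and> pos_diag_matrix (d l) D \<and> P l = Q * D)}"

definition frob_sq :: "real mat \<Rightarrow> real" where
  "frob_sq A = (\<Sum>i<dim_row A. \<Sum>j<dim_col A. (A $$ (i, j))\<^sup>2)"

definition vec_sq :: "real vec \<Rightarrow> real" where
  "vec_sq v = (\<Sum>i<dim_vec v. (v $ i)\<^sup>2)"

definition rnn_norm :: "nat \<Rightarrow> rnn_params \<Rightarrow> real" where
  "rnn_norm L \<theta> = sqrt (frob_sq (Wff \<theta> (L - 1)) + vec_sq (bias \<theta> (L - 1)) +
      (\<Sum>l\<in>{0<..<L}. frob_sq (Wrec \<theta> l) + frob_sq (Wff \<theta> (l - 1)) + vec_sq (bias \<theta> (l - 1))))"

definition X_min :: "nat \<Rightarrow> (nat \<Rightarrow> nat) \<Rightarrow> rnn_params \<Rightarrow> rnn_params set" where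
  "X_min L d \<theta> = {\<theta>'. (\<exists>P\<in>G_scaled L d. \<theta>' = rnn_act L P \<theta>) \<and>
      (\<forall>P\<in>G_scaled L d. rnn_norm L \<theta>' \<le> rnn_norm L (rnn_act L P \<theta>))}"

end

theory Submission imports Defs begin

abbreviation iv :: "(nat\<Rightarrow>nat) \<Rightarrow> nat \<Rightarrow> nat" where "iv q \<equiv> inv_into UNIV q"

definition S :: "(nat\<Rightarrow>nat) \<Rightarrow> (nat\<Rightarrow>real) \<Rightarrow> nat \<Rightarrow> real mat" where
  "S \<rho> c n = mat n n (\<lambda>(i,j). if j = \<rho> i then c j else 0)"

lemma S_carrier[simp]: "S \<rho> c n \<in> carrier_mat n n" "dim_row (S \<rho> c n) = n" "dim_col (S \<rho> c n) = n"
  by (auto simp: S_def)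

lemma S_mult_left:
  assumes p: "\<rho> permutes {..<n}" and A: "A \<in> carrier_mat n k" and i: "i < n" and m: "m < k"
  shows "(S \<rho> c n * A) $$ (i,m) = c (\<rho> i) * A $$ (\<rho> i, m)"
proof -
  have r: "\<rho> i < n" using permutes_in_image[OF p] i by auto
  have "(S \<rho> c n * A) $$ (i,m) = (\<Sum>j\<in>{0..<n}. (if j = \<rho> i then c j else 0) * A $$ (j, m))"
    using A i m by (simp add: S_def scalar_prod_def row_def col_def)
  also have "\<dots> = (\<Sum>j\<in>{0..<n}. if j = \<rho> i then c j * A $$ (j, m) else 0)"
    by (rule sum.cong) auto
  also have "\<dots> = c (\<rho> i) * A $$ (\<rho> i, m)" using r by (simp add: sum.delta')
  finally show ?thesis .
qed

lemma S_mult_right: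
  assumes p: "q permutes {..<n}" and A: "A \<in> carrier_mat k n" and i: "i < k" and j: "j < n"
  shows "(A * S q w n) $$ (i,j) = A $$ (i, iv q j) * w j"
proof -
  have r: "iv q j < n" using permutes_in_image[OF permutes_inv[OF p]] j by auto
  have "(A * S q w n) $$ (i,j) = (\<Sum>m\<in>{0..<n}. A $$ (i, m) * (if j = q m then w j else 0))"
    using A i j by (simp add: S_def scalar_prod_def row_def col_def)
  also have "\<dots> = (\<Sum>m\<in>{0..<n}. if m = iv q j then A $$ (i, m) * w j else 0)"
    by (rule sum.cong) (auto simp: permutes_inverses[OF p])
  also have "\<dots> = A $$ (i, iv q j) * w j" using r by (simp add: sum.delta)
  finally show ?thesis .
qed

lemma S_mult_vec:
  assumes p: "\<rho> permutes {..<n}" and b: "b \<in> carrier_vec n" and i: "i < n"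
  shows "(S \<rho> c n *\<^sub>v b) $ i = c (\<rho> i) * b $ (\<rho> i)"
proof -
  have r: "\<rho> i < n" using permutes_in_image[OF p] i by auto
  have "(S \<rho> c n *\<^sub>v b) $ i = (\<Sum>j\<in>{0..<n}. (if j = \<rho> i then c j else 0) * b $ j)"
    using b i by (simp add: S_def scalar_prod_def row_def)
  also have "\<dots> = (\<Sum>j\<in>{0..<n}. if j = \<rho> i then c j * b $ j else 0)"
    by (rule sum.cong) auto
  also have "\<dots> = c (\<rho> i) * b $ (\<rho> i)" using r by (simp add: sum.delta')
  finally show ?thesis .
qed

definition Sinv where "Sinv \<rho> c n = S (iv \<rho>) (\<lambda>k. 1 / c (\<rho> k)) n"

lemma S_Sinv:
  assumes p: "\<rho> permutes {..<n}" and c: "\<forall>i<n. c i > 0"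
  shows "S \<rho> c n * Sinv \<rho> c n = 1\<^sub>m n" "Sinv \<rho> c n * S \<rho> c n = 1\<^sub>m n"
proof -
  have pi: "iv \<rho> permutes {..<n}" using permutes_inv[OF p] .
  show "S \<rho> c n * Sinv \<rho> c n = 1\<^sub>m n"
  proof (rule eq_matI)
    fix i j assume i: "i < dim_row (1\<^sub>m n :: real mat)" and j: "j < dim_col (1\<^sub>m n :: real mat)"
    have r: "\<rho> i < n" using permutes_in_image[OF p] i by auto
    have "(S \<rho> c n * Sinv \<rho> c n) $$ (i,j) = c (\<rho> i) * Sinv \<rho> c n $$ (\<rho> i, j)"
      using i j by (intro S_mult_left[OF p]) (auto simp: Sinv_def)
    also have "\<dots> = (1\<^sub>m n :: real mat) $$ (i,j)" using i j r c
      by (auto simp: Sinv_def S_def permutes_inverses[OF p] permutes_inv_eq[OF p])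
    finally show "(S \<rho> c n * Sinv \<rho> c n) $$ (i,j) = (1\<^sub>m n :: real mat) $$ (i,j)" .
  qed (auto simp: Sinv_def)
  show "Sinv \<rho> c n * S \<rho> c n = 1\<^sub>m n"
  proof (rule eq_matI)
    fix i j assume i: "i < dim_row (1\<^sub>m n :: real mat)" and j: "j < dim_col (1\<^sub>m n :: real mat)"
    have r: "iv \<rho> i < n" using permutes_in_image[OF pi] i by auto
    have "(Sinv \<rho> c n * S \<rho> c n) $$ (i,j) = (1 / c (\<rho> (iv \<rho> i))) * S \<rho> c n $$ (iv \<rho> i, j)"
      unfolding Sinv_def using i j by (intro S_mult_left[OF pi]) auto
    also have "\<dots> = (1\<^sub>m n :: real mat) $$ (i,j)" using i j r c
      by (auto simp: S_def permutes_inverses[OF p])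
    finally show "(Sinv \<rho> c n * S \<rho> c n) $$ (i,j) = (1\<^sub>m n :: real mat) $$ (i,j)" .
  qed (auto simp: Sinv_def)
qed

lemma inv_mat_unique:
  assumes A: "A \<in> carrier_mat n n" and "A * B = 1\<^sub>m n" "B * A = 1\<^sub>m n" and B: "B \<in> carrier_mat n n"
  shows "inv_mat A = B"
proof -
  have ex: "inverts_mat A B \<and> inverts_mat B A" using assms by (auto simp: inverts_mat_def)
  define C where "C = inv_mat A"
  have C: "inverts_mat A C \<and> inverts_mat C A" unfolding C_def inv_mat_def by (rule someI, rule ex)
  hence AC: "A * C = 1\<^sub>m n" and CA: "C * A = 1\<^sub>m (dim_row C)" using A by (auto simp: inverts_mat_def)
  have "dim_col C = n" using AC A by (metis index_mult_mat(3) index_one_mat(3))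
  moreover have "dim_row C = n" using CA A by (metis index_mult_mat(3) index_one_mat(3) carrier_matD(2))
  ultimately have Cc: "C \<in> carrier_mat n n" by auto
  have "C = C * (A * B)" using assms Cc by simp
  also have "\<dots> = (C * A) * B" using Cc A B by simp
  also have "\<dots> = B" using CA \<open>dim_row C = n\<close> B by simp
  finally show ?thesis unfolding C_def .
qed

lemma inv_mat_S:
  assumes p: "\<rho> permutes {..<n}" and c: "\<forall>i<n. c i > 0"
  shows "inv_mat (S \<rho> c n) = Sinv \<rho> c n"
  using inv_mat_unique[OF S_carrier(1) S_Sinv[OF p c]] by (simp add: Sinv_def)

lemma invertible_S:
  assumes p: "\<rho> permutes {..<n}" and c: "\<forall>i<n. c i > 0"
  shows "invertible_mat (S \<rho> c n)"
  unfolding invertible_mat_def inverts_mat_def using S_Sinv[OF p c]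
  by (auto simp: square_mat.simps Sinv_def)

lemma conj_S:
  assumes p1: "\<rho>1 permutes {..<n1}" and p0: "\<rho>0 permutes {..<n0}" and c0: "\<forall>i<n0. c0 i > 0"
    and A: "A \<in> carrier_mat n1 n0"
  shows "S \<rho>1 c1 n1 * A * inv_mat (S \<rho>0 c0 n0) =
         mat n1 n0 (\<lambda>(i,j). c1 (\<rho>1 i) * A $$ (\<rho>1 i, \<rho>0 j) / c0 (\<rho>0 j))"
proof (rule eq_matI)
  fix i j assume i: "i < dim_row (mat n1 n0 (\<lambda>(i,j). c1 (\<rho>1 i) * A $$ (\<rho>1 i, \<rho>0 j) / c0 (\<rho>0 j)))"
    and j: "j < dim_col (mat n1 n0 (\<lambda>(i,j). c1 (\<rho>1 i) * A $$ (\<rho>1 i, \<rho>0 j) / c0 (\<rho>0 j)))"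
  have pi: "iv \<rho>0 permutes {..<n0}" using permutes_inv[OF p0] .
  have SA: "S \<rho>1 c1 n1 * A \<in> carrier_mat n1 n0" using A by auto
  have r: "\<rho>0 j < n0" using permutes_in_image[OF p0] j by auto
  have "(S \<rho>1 c1 n1 * A * inv_mat (S \<rho>0 c0 n0)) $$ (i,j) =
     (S \<rho>1 c1 n1 * A) $$ (i, iv (iv \<rho>0) j) * (1 / c0 (\<rho>0 j))"
    unfolding inv_mat_S[OF p0 c0] Sinv_def using i j
    by (subst S_mult_right[OF pi SA]) (auto simp: permutes_inverses[OF p0])
  also have "\<dots> = c1 (\<rho>1 i) * A $$ (\<rho>1 i, \<rho>0 j) / c0 (\<rho>0 j)"
    using i j r by (simp add: permutes_inv_inv[OF p0] S_mult_left[OF p1 A])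
  finally show "(S \<rho>1 c1 n1 * A * inv_mat (S \<rho>0 c0 n0)) $$ (i,j) =
     mat n1 n0 (\<lambda>(i,j). c1 (\<rho>1 i) * A $$ (\<rho>1 i, \<rho>0 j) / c0 (\<rho>0 j)) $$ (i,j)" using i j by simp
qed (auto simp: inv_mat_S[OF p0 c0] Sinv_def)


definition Sform :: "nat \<Rightarrow> (nat\<Rightarrow>nat) \<Rightarrow> (nat \<Rightarrow> real mat) \<Rightarrow> (nat \<Rightarrow> nat \<Rightarrow> nat) \<Rightarrow> (nat \<Rightarrow> nat \<Rightarrow> real) \<Rightarrow> bool" where
  "Sform L d P \<rho> c \<longleftrightarrow> (\<forall>l\<le>L. \<rho> l permutes {..<d l} \<and> (\<forall>i<d l. c l i > 0) \<and> P l = S (\<rho> l) (c l) (d l))"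

definition sact :: "nat \<Rightarrow> (nat\<Rightarrow>nat) \<Rightarrow> (nat \<Rightarrow> nat \<Rightarrow> nat) \<Rightarrow> (nat \<Rightarrow> nat \<Rightarrow> real) \<Rightarrow> rnn_params \<Rightarrow> rnn_params" where
  "sact L d \<rho> c \<theta> =
   \<lparr> Wrec = (\<lambda>l. if 1 \<le> l \<and> l \<le> L then mat (d l) (d l) (\<lambda>(i,j). c l (\<rho> l i) * Wrec \<theta> l $$ (\<rho> l i, \<rho> l j) / c l (\<rho> l j)) else Wrec \<theta> l),
     Wff = (\<lambda>l. if l < L then mat (d (Suc l)) (d l) (\<lambda>(i,j). c (Suc l) (\<rho> (Suc l) i) * Wff \<theta> l $$ (\<rho> (Suc l) i, \<rho> l j) / c l (\<rho> l j)) else Wff \<theta> l),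
     bias = (\<lambda>l. if l < L then vec (d (Suc l)) (\<lambda>i. c (Suc l) (\<rho> (Suc l) i) * bias \<theta> l $ (\<rho> (Suc l) i)) else bias \<theta> l) \<rparr>"

lemma act_eq:
  assumes P: "Sform L d P \<rho> c" and wf: "rnn_wf L d \<theta>"
  shows "rnn_act L P \<theta> = sact L d \<rho> c \<theta>"
proof -
  have a: "Wrec (rnn_act L P \<theta>) = Wrec (sact L d \<rho> c \<theta>)"
  proof
    fix l show "Wrec (rnn_act L P \<theta>) l = Wrec (sact L d \<rho> c \<theta>) l"
    proof (cases "1 \<le> l \<and> l \<le> L")
      case True
      have p: "\<rho> l permutes {..<d l}" and e: "P l = S (\<rho> l) (c l) (d l)" and cp: "\<forall>i<d l. c l i > 0"
        using P True unfolding Sform_def by auto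
      have A: "Wrec \<theta> l \<in> carrier_mat (d l) (d l)" using wf True unfolding rnn_wf_def by auto
      show ?thesis using True unfolding rnn_act_def sact_def by (simp add: e conj_S[OF p p cp A])
    next
      case False
      then show ?thesis unfolding rnn_act_def sact_def by (simp only: rnn_params.simps if_not_P[OF False] if_False)
    qed
  qed
  have b: "Wff (rnn_act L P \<theta>) = Wff (sact L d \<rho> c \<theta>)"
  proof
    fix l show "Wff (rnn_act L P \<theta>) l = Wff (sact L d \<rho> c \<theta>) l"
    proof (cases "l < L")
      case True
      have p: "\<rho> (Suc l) permutes {..<d (Suc l)}" and e: "P (Suc l) = S (\<rho> (Suc l)) (c (Suc l)) (d (Suc l))"
        and p0: "\<rho> l permutes {..<d l}" and e0: "P l = S (\<rho> l) (c l) (d l)" and cp: "\<forall>i<d l. c l i > 0"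
        using P True unfolding Sform_def by auto
      have A: "Wff \<theta> l \<in> carrier_mat (d (Suc l)) (d l)" using wf True unfolding rnn_wf_def by auto
      show ?thesis using True unfolding rnn_act_def sact_def by (simp add: e e0 conj_S[OF p p0 cp A])
    next
      case False
      then show ?thesis unfolding rnn_act_def sact_def by (simp only: rnn_params.simps if_not_P[OF False] if_False)
    qed
  qed
  have c: "bias (rnn_act L P \<theta>) = bias (sact L d \<rho> c \<theta>)"
  proof
    fix l show "bias (rnn_act L P \<theta>) l = bias (sact L d \<rho> c \<theta>) l"
    proof (cases "l < L")
      case True
      have p: "\<rho> (Suc l) permutes {..<d (Suc l)}" and e: "P (Suc l) = S (\<rho> (Suc l)) (c (Suc l)) (d (Suc l))"
        using P True unfolding Sform_def by auto
      have bc: "bias \<theta> l \<in> carrier_vec (d (Suc l))" using wf True unfolding rnn_wf_def by auto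
      show ?thesis using True unfolding rnn_act_def sact_def
        by (auto simp: e intro!: eq_vecI simp del: index_mult_mat_vec simp add: S_mult_vec[OF p bc])
    qed (simp add: rnn_act_def sact_def)
  qed
  show ?thesis using a b c by (simp add: rnn_act_def sact_def)
qed

lemma wf_sact: "rnn_wf L d (sact L d \<rho> c \<theta>)"
  unfolding rnn_wf_def sact_def by auto

lemma sact_comp:
  assumes t: "\<forall>l\<le>L. \<tau> l permutes {..<d l}"
  shows "sact L d \<tau> (\<lambda>_ _. 1) (sact L d \<rho> c \<theta>) = sact L d (\<lambda>l. \<rho> l \<circ> \<tau> l) c \<theta>"
proof -
  have tl: "\<And>l i. l \<le> L \<Longrightarrow> i < d l \<Longrightarrow> \<tau> l i < d l"
    using t permutes_in_image by fastforce
  have a: "Wrec (sact L d \<tau> (\<lambda>_ _. 1) (sact L d \<rho> c \<theta>)) = Wrec (sact L d (\<lambda>l. \<rho> l \<circ> \<tau> l) c \<theta>)"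
    by (auto simp: sact_def tl intro!: cong_mat ext)
  have b: "Wff (sact L d \<tau> (\<lambda>_ _. 1) (sact L d \<rho> c \<theta>)) = Wff (sact L d (\<lambda>l. \<rho> l \<circ> \<tau> l) c \<theta>)"
    by (auto simp: sact_def tl intro!: cong_mat ext)
  have c: "bias (sact L d \<tau> (\<lambda>_ _. 1) (sact L d \<rho> c \<theta>)) = bias (sact L d (\<lambda>l. \<rho> l \<circ> \<tau> l) c \<theta>)"
    by (auto simp: sact_def tl intro!: ext eq_vecI)
  show ?thesis using a b c by (simp add: sact_def)
qed

lemma sact_cong:
  assumes t: "\<forall>l\<le>L. \<rho> l permutes {..<d l}" and e: "\<forall>l\<le>L. \<forall>i<d l. c l i = c' l i"
  shows "sact L d \<rho> c \<theta> = sact L d \<rho> c' \<theta>"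
proof -
  have tl: "\<And>l i. l \<le> L \<Longrightarrow> i < d l \<Longrightarrow> \<rho> l i < d l"
    using t permutes_in_image by fastforce
  have a: "Wrec (sact L d \<rho> c \<theta>) = Wrec (sact L d \<rho> c' \<theta>)"
    by (auto simp: sact_def tl e intro!: cong_mat ext)
  have b: "Wff (sact L d \<rho> c \<theta>) = Wff (sact L d \<rho> c' \<theta>)"
    by (auto simp: sact_def tl e intro!: cong_mat ext)
  have c: "bias (sact L d \<rho> c \<theta>) = bias (sact L d \<rho> c' \<theta>)"
    by (auto simp: sact_def tl e intro!: ext eq_vecI)
  show ?thesis using a b c by (simp add: sact_def)
qed

definition fs :: "nat \<Rightarrow> nat \<Rightarrow> (nat \<Rightarrow> nat \<Rightarrow> real) \<Rightarrow> real" where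
  "fs n m g = (\<Sum>i<n. \<Sum>j<m. (g i j)\<^sup>2)"
definition vs :: "nat \<Rightarrow> (nat \<Rightarrow> real) \<Rightarrow> real" where
  "vs n g = (\<Sum>i<n. (g i)\<^sup>2)"

lemma reindex2:
  assumes p1: "\<rho>1 permutes {..<n}" and p0: "\<rho>0 permutes {..<m}"
  shows "(\<Sum>i<n. \<Sum>j<m. h (\<rho>1 i) (\<rho>0 j)) = (\<Sum>i<n. \<Sum>j<m. h i j)"
proof -
  have "(\<Sum>i<n. \<Sum>j<m. h (\<rho>1 i) (\<rho>0 j)) = (\<Sum>i<n. \<Sum>j<m. h (\<rho>1 i) j)"
    by (rule sum.cong[OF refl], rule sum.reindex_bij_betw[OF permutes_imp_bij[OF p0]])
  also have "\<dots> = (\<Sum>i<n. \<Sum>j<m. h i j)"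
    by (rule sum.reindex_bij_betw[OF permutes_imp_bij[OF p1], where g = "\<lambda>i. \<Sum>j<m. h i j"])
  finally show ?thesis .
qed

lemma frob_S:
  assumes p1: "\<rho>1 permutes {..<n1}" and p0: "\<rho>0 permutes {..<n0}"
  shows "frob_sq (mat n1 n0 (\<lambda>(i,j). c1 (\<rho>1 i) * A $$ (\<rho>1 i, \<rho>0 j) / c0 (\<rho>0 j)))
     = fs n1 n0 (\<lambda>i j. c1 i * A $$ (i,j) / c0 j)"
  unfolding frob_sq_def fs_def
  using reindex2[OF p1 p0, where h = "\<lambda>a b. (c1 a * A $$ (a,b) / c0 b)\<^sup>2"] by simp

lemma vec_S:
  assumes p1: "\<rho>1 permutes {..<n1}"
  shows "vec_sq (vec n1 (\<lambda>i. c1 (\<rho>1 i) * b $ (\<rho>1 i))) = vs n1 (\<lambda>i. c1 i * b $ i)"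
  unfolding vec_sq_def vs_def
  using sum.reindex_bij_betw[OF permutes_imp_bij[OF p1], where g = "\<lambda>a. (c1 a * b $ a)\<^sup>2"] by simp

definition F :: "nat \<Rightarrow> (nat\<Rightarrow>nat) \<Rightarrow> rnn_params \<Rightarrow> (nat \<Rightarrow> nat \<Rightarrow> real) \<Rightarrow> real" where
  "F L d \<theta> c = fs (d L) (d (L-1)) (\<lambda>i j. c L i * Wff \<theta> (L-1) $$ (i,j) / c (L-1) j)
     + vs (d L) (\<lambda>i. c L i * bias \<theta> (L-1) $ i)
     + (\<Sum>l\<in>{0<..<L}. fs (d l) (d l) (\<lambda>i j. c l i * Wrec \<theta> l $$ (i,j) / c l j)
         + fs (d l) (d (l-1)) (\<lambda>i j. c l i * Wff \<theta> (l-1) $$ (i,j) / c (l-1) j)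
         + vs (d l) (\<lambda>i. c l i * bias \<theta> (l-1) $ i))"

lemma norm_sact:
  assumes L: "0 < L" and t: "\<forall>l\<le>L. \<rho> l permutes {..<d l}"
  shows "rnn_norm L (sact L d \<rho> c \<theta>) = sqrt (F L d \<theta> c)"
proof -
  have tL: "\<rho> L permutes {..<d L}" "\<rho> (L - Suc 0) permutes {..<d (L - Suc 0)}" using t by auto
  have s: "(\<Sum>l\<in>{0<..<L}. frob_sq (Wrec (sact L d \<rho> c \<theta>) l) + frob_sq (Wff (sact L d \<rho> c \<theta>) (l - 1))
       + vec_sq (bias (sact L d \<rho> c \<theta>) (l - 1))) =
     (\<Sum>l\<in>{0<..<L}. fs (d l) (d l) (\<lambda>i j. c l i * Wrec \<theta> l $$ (i,j) / c l j)
         + fs (d l) (d (l-1)) (\<lambda>i j. c l i * Wff \<theta> (l-1) $$ (i,j) / c (l-1) j)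
         + vs (d l) (\<lambda>i. c l i * bias \<theta> (l-1) $ i))"
  proof (rule sum.cong[OF refl])
    fix l assume l: "l \<in> {0<..<L}"
    have pl: "\<rho> l permutes {..<d l}" "\<rho> (l - Suc 0) permutes {..<d (l - Suc 0)}" using t l by auto
    have sl: "Suc (l-1) = l" "l - 1 < L" "1 \<le> l" "l \<le> L" "l - Suc 0 < L" "Suc (l - Suc 0) = l" using l by auto
    show "frob_sq (Wrec (sact L d \<rho> c \<theta>) l) + frob_sq (Wff (sact L d \<rho> c \<theta>) (l - 1))
       + vec_sq (bias (sact L d \<rho> c \<theta>) (l - 1)) = fs (d l) (d l) (\<lambda>i j. c l i * Wrec \<theta> l $$ (i,j) / c l j)
         + fs (d l) (d (l-1)) (\<lambda>i j. c l i * Wff \<theta> (l-1) $$ (i,j) / c (l-1) j)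
         + vs (d l) (\<lambda>i. c l i * bias \<theta> (l-1) $ i)"
      using l unfolding sact_def by (simp add: sl frob_S[OF pl(1) pl(1)] frob_S[OF pl(1) pl(2)] vec_S[OF pl(1)])
  qed
  have sL: "Suc (L-1) = L" "Suc (L - Suc 0) = L" "L - Suc 0 < L" using L by auto
  show ?thesis unfolding rnn_norm_def F_def s using L
    by (simp add: sact_def sL frob_S[OF tL(1) tL(2)] vec_S[OF tL(1)])
qed


lemma sq_mid:
  assumes "a1 > 0" "a2 > 0" "b1 > 0" "b2 > 0"
  shows "(a1 * w / b1 - a2 * w / b2)\<^sup>2 = (a1 * w / b1)\<^sup>2 + (a2 * w / b2)\<^sup>2 - 2 * (sqrt (a1 * a2) * w / sqrt (b1 * b2))\<^sup>2"
proof -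
  have "(sqrt (a1 * a2) * w / sqrt (b1 * b2))\<^sup>2 = (a1 * a2) * w\<^sup>2 / (b1 * b2)"
    using assms by (simp add: power_divide power_mult_distrib)
  then show ?thesis using assms by (simp add: power2_eq_square field_simps)
qed

lemma sqv_mid:
  assumes "a1 > 0" "a2 > 0"
  shows "(a1 * w - a2 * w)\<^sup>2 = (a1 * w)\<^sup>2 + (a2 * w)\<^sup>2 - 2 * (sqrt (a1 * a2) * w)\<^sup>2"
proof -
  have "(sqrt (a1 * a2) * w)\<^sup>2 = (a1 * a2) * w\<^sup>2"
    using assms by (simp add: power_mult_distrib)
  then show ?thesis using assms by (simp add: power2_eq_square field_simps)
qed

lemma fs_mid:
  assumes a: "\<forall>i<n. a1 i > 0 \<and> a2 i > 0" and b: "\<forall>j<m. b1 j > 0 \<and> b2 j > 0"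
  shows "fs n m (\<lambda>i j. a1 i * W i j / b1 j) + fs n m (\<lambda>i j. a2 i * W i j / b2 j)
     - 2 * fs n m (\<lambda>i j. sqrt (a1 i * a2 i) * W i j / sqrt (b1 j * b2 j))
     = fs n m (\<lambda>i j. a1 i * W i j / b1 j - a2 i * W i j / b2 j)"
proof -
  have "fs n m (\<lambda>i j. a1 i * W i j / b1 j - a2 i * W i j / b2 j) =
     (\<Sum>i<n. \<Sum>j<m. (a1 i * W i j / b1 j)\<^sup>2 + (a2 i * W i j / b2 j)\<^sup>2 - 2 * (sqrt (a1 i * a2 i) * W i j / sqrt (b1 j * b2 j))\<^sup>2)"
    unfolding fs_def using a b by (intro sum.cong refl) (simp add: sq_mid)
  then show ?thesis unfolding fs_def by (simp add: sum.distrib sum_subtractf sum_distrib_left)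
qed

lemma vs_mid:
  assumes a: "\<forall>i<n. a1 i > 0 \<and> a2 i > 0"
  shows "vs n (\<lambda>i. a1 i * w i) + vs n (\<lambda>i. a2 i * w i) - 2 * vs n (\<lambda>i. sqrt (a1 i * a2 i) * w i)
     = vs n (\<lambda>i. a1 i * w i - a2 i * w i)"
proof -
  have "vs n (\<lambda>i. a1 i * w i - a2 i * w i) =
     (\<Sum>i<n. (a1 i * w i)\<^sup>2 + (a2 i * w i)\<^sup>2 - 2 * (sqrt (a1 i * a2 i) * w i)\<^sup>2)"
    unfolding vs_def using a by (intro sum.cong refl) (simp add: sqv_mid)
  then show ?thesis unfolding vs_def by (simp add: sum.distrib sum_subtractf sum_distrib_left)
qed

lemma fs_nonneg: "fs n m g \<ge> 0" unfolding fs_def by (intro sum_nonneg) auto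
lemma vs_nonneg: "vs n g \<ge> 0" unfolding vs_def by (intro sum_nonneg) auto

lemma F_mid:
  assumes L: "0 < L" and c1: "\<forall>l\<le>L. \<forall>i<d l. c1 l i > 0" and c2: "\<forall>l\<le>L. \<forall>i<d l. c2 l i > 0"
  shows "F L d \<theta> c1 + F L d \<theta> c2 - 2 * F L d \<theta> (\<lambda>l i. sqrt (c1 l i * c2 l i)) \<ge>
     (\<Sum>l\<in>{0<..<L}. vs (d l) (\<lambda>i. c1 l i * bias \<theta> (l-1) $ i - c2 l i * bias \<theta> (l-1) $ i))"
proof -
  let ?cm = "\<lambda>l i. sqrt (c1 l i * c2 l i)"
  have pos: "\<And>l. l \<le> L \<Longrightarrow> \<forall>i<d l. c1 l i > 0 \<and> c2 l i > 0" using c1 c2 by auto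
  have e1: "fs (d L) (d (L-1)) (\<lambda>i j. c1 L i * Wff \<theta> (L-1) $$ (i,j) / c1 (L-1) j)
     + fs (d L) (d (L-1)) (\<lambda>i j. c2 L i * Wff \<theta> (L-1) $$ (i,j) / c2 (L-1) j)
     - 2 * fs (d L) (d (L-1)) (\<lambda>i j. ?cm L i * Wff \<theta> (L-1) $$ (i,j) / ?cm (L-1) j) \<ge> 0"
    using fs_mid[OF pos pos, of L "L-1" "\<lambda>i j. Wff \<theta> (L-1) $$ (i,j)"] fs_nonneg by auto
  have e2: "vs (d L) (\<lambda>i. c1 L i * bias \<theta> (L-1) $ i) + vs (d L) (\<lambda>i. c2 L i * bias \<theta> (L-1) $ i)
      - 2 * vs (d L) (\<lambda>i. ?cm L i * bias \<theta> (L-1) $ i) \<ge> 0"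
    using vs_mid[OF pos, of L "\<lambda>i. bias \<theta> (L-1) $ i"] vs_nonneg by auto
  have e3: "(\<Sum>l\<in>{0<..<L}. fs (d l) (d l) (\<lambda>i j. c1 l i * Wrec \<theta> l $$ (i,j) / c1 l j)
         + fs (d l) (d (l-1)) (\<lambda>i j. c1 l i * Wff \<theta> (l-1) $$ (i,j) / c1 (l-1) j)
         + vs (d l) (\<lambda>i. c1 l i * bias \<theta> (l-1) $ i))
     + (\<Sum>l\<in>{0<..<L}. fs (d l) (d l) (\<lambda>i j. c2 l i * Wrec \<theta> l $$ (i,j) / c2 l j)
         + fs (d l) (d (l-1)) (\<lambda>i j. c2 l i * Wff \<theta> (l-1) $$ (i,j) / c2 (l-1) j)
         + vs (d l) (\<lambda>i. c2 l i * bias \<theta> (l-1) $ i))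
     - 2 * (\<Sum>l\<in>{0<..<L}. fs (d l) (d l) (\<lambda>i j. ?cm l i * Wrec \<theta> l $$ (i,j) / ?cm l j)
         + fs (d l) (d (l-1)) (\<lambda>i j. ?cm l i * Wff \<theta> (l-1) $$ (i,j) / ?cm (l-1) j)
         + vs (d l) (\<lambda>i. ?cm l i * bias \<theta> (l-1) $ i))
     \<ge> (\<Sum>l\<in>{0<..<L}. vs (d l) (\<lambda>i. c1 l i * bias \<theta> (l-1) $ i - c2 l i * bias \<theta> (l-1) $ i))"
  proof -
    have "\<And>l. l \<in> {0<..<L} \<Longrightarrow>
        vs (d l) (\<lambda>i. c1 l i * bias \<theta> (l-1) $ i - c2 l i * bias \<theta> (l-1) $ i) \<le>
        (fs (d l) (d l) (\<lambda>i j. c1 l i * Wrec \<theta> l $$ (i,j) / c1 l j)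
         + fs (d l) (d (l-1)) (\<lambda>i j. c1 l i * Wff \<theta> (l-1) $$ (i,j) / c1 (l-1) j)
         + vs (d l) (\<lambda>i. c1 l i * bias \<theta> (l-1) $ i))
       + (fs (d l) (d l) (\<lambda>i j. c2 l i * Wrec \<theta> l $$ (i,j) / c2 l j)
         + fs (d l) (d (l-1)) (\<lambda>i j. c2 l i * Wff \<theta> (l-1) $$ (i,j) / c2 (l-1) j)
         + vs (d l) (\<lambda>i. c2 l i * bias \<theta> (l-1) $ i))
       - 2 * (fs (d l) (d l) (\<lambda>i j. ?cm l i * Wrec \<theta> l $$ (i,j) / ?cm l j)
         + fs (d l) (d (l-1)) (\<lambda>i j. ?cm l i * Wff \<theta> (l-1) $$ (i,j) / ?cm (l-1) j)
         + vs (d l) (\<lambda>i. ?cm l i * bias \<theta> (l-1) $ i))"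
    proof -
      fix l assume l: "l \<in> {0<..<L}"
      have p1: "\<forall>i<d l. c1 l i > 0 \<and> c2 l i > 0" and p0: "\<forall>i<d (l-1). c1 (l-1) i > 0 \<and> c2 (l-1) i > 0"
        using pos l by auto
      have a: "fs (d l) (d l) (\<lambda>i j. c1 l i * Wrec \<theta> l $$ (i,j) / c1 l j) + fs (d l) (d l) (\<lambda>i j. c2 l i * Wrec \<theta> l $$ (i,j) / c2 l j)
          - 2 * fs (d l) (d l) (\<lambda>i j. ?cm l i * Wrec \<theta> l $$ (i,j) / ?cm l j) \<ge> 0"
        using fs_mid[OF p1 p1, of "\<lambda>i j. Wrec \<theta> l $$ (i,j)"] fs_nonneg by auto
      have b: "fs (d l) (d (l-1)) (\<lambda>i j. c1 l i * Wff \<theta> (l-1) $$ (i,j) / c1 (l-1) j) + fs (d l) (d (l-1)) (\<lambda>i j. c2 l i * Wff \<theta> (l-1) $$ (i,j) / c2 (l-1) j)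
          - 2 * fs (d l) (d (l-1)) (\<lambda>i j. ?cm l i * Wff \<theta> (l-1) $$ (i,j) / ?cm (l-1) j) \<ge> 0"
        using fs_mid[OF p1 p0, of "\<lambda>i j. Wff \<theta> (l-1) $$ (i,j)"] fs_nonneg by auto
      have c: "vs (d l) (\<lambda>i. c1 l i * bias \<theta> (l-1) $ i) + vs (d l) (\<lambda>i. c2 l i * bias \<theta> (l-1) $ i)
          - 2 * vs (d l) (\<lambda>i. ?cm l i * bias \<theta> (l-1) $ i) = vs (d l) (\<lambda>i. c1 l i * bias \<theta> (l-1) $ i - c2 l i * bias \<theta> (l-1) $ i)"
        using vs_mid[OF p1, of "\<lambda>i. bias \<theta> (l-1) $ i"] by auto
      from a b c show "?thesis l" by (smt (verit))
    qed
    then have "(\<Sum>l\<in>{0<..<L}. vs (d l) (\<lambda>i. c1 l i * bias \<theta> (l-1) $ i - c2 l i * bias \<theta> (l-1) $ i)) \<le>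
       (\<Sum>l\<in>{0<..<L}. (fs (d l) (d l) (\<lambda>i j. c1 l i * Wrec \<theta> l $$ (i,j) / c1 l j)
         + fs (d l) (d (l-1)) (\<lambda>i j. c1 l i * Wff \<theta> (l-1) $$ (i,j) / c1 (l-1) j)
         + vs (d l) (\<lambda>i. c1 l i * bias \<theta> (l-1) $ i))
       + (fs (d l) (d l) (\<lambda>i j. c2 l i * Wrec \<theta> l $$ (i,j) / c2 l j)
         + fs (d l) (d (l-1)) (\<lambda>i j. c2 l i * Wff \<theta> (l-1) $$ (i,j) / c2 (l-1) j)
         + vs (d l) (\<lambda>i. c2 l i * bias \<theta> (l-1) $ i))
       - 2 * (fs (d l) (d l) (\<lambda>i j. ?cm l i * Wrec \<theta> l $$ (i,j) / ?cm l j)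
         + fs (d l) (d (l-1)) (\<lambda>i j. ?cm l i * Wff \<theta> (l-1) $$ (i,j) / ?cm (l-1) j)
         + vs (d l) (\<lambda>i. ?cm l i * bias \<theta> (l-1) $ i)))"
      by (rule sum_mono)
    then show ?thesis by (simp add: sum.distrib sum_subtractf sum_distrib_left)
  qed
  show ?thesis unfolding F_def using e1 e2 e3 by (smt (verit))
qed


lemma S_cong: "(\<And>i. i < n \<Longrightarrow> c i = c' i) \<Longrightarrow> S \<rho> c n = S \<rho> c' n"
  unfolding S_def by (intro cong_mat) auto

lemma one_S: "1\<^sub>m n = S id (\<lambda>_. 1) n"
  by (rule eq_matI) (auto simp: S_def)

lemma S_perm:
  assumes p: "\<tau> permutes {..<n}"
  shows "perm_matrix n (S \<tau> (\<lambda>_. 1) n)"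
  unfolding perm_matrix_def
proof (intro exI conjI)
  show "iv \<tau> permutes {..<n}" using permutes_inv[OF p] .
  show "S \<tau> (\<lambda>_. 1) n = mat n n (\<lambda>(i, j). if i = iv \<tau> j then 1 else 0)"
    unfolding S_def by (intro cong_mat) (auto simp: permutes_inv_eq[OF p] permutes_inverses[OF p])
qed

lemma QD_S:
  assumes Q: "perm_matrix n Q" and D: "pos_diag_matrix n D"
  shows "\<exists>\<rho> c. \<rho> permutes {..<n} \<and> (\<forall>i<n. c i > 0) \<and> Q * D = S \<rho> c n"
proof -
  obtain q where q: "q permutes {..<n}" and Qe: "Q = mat n n (\<lambda>(i, j). if i = q j then 1 else 0)"
    using Q unfolding perm_matrix_def by auto
  have qi: "iv q permutes {..<n}" using permutes_inv[OF q] .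
  have QS: "Q = S (iv q) (\<lambda>_. 1) n" unfolding Qe S_def
    by (intro cong_mat) (auto simp: permutes_inv_eq[OF q] permutes_inverses[OF q])
  have Dc: "D \<in> carrier_mat n n" and Dd: "diagonal_mat D" and Dp: "\<forall>i<n. D $$ (i,i) > 0"
    using D unfolding pos_diag_matrix_def by auto
  have "Q * D = S (iv q) (\<lambda>j. D $$ (j,j)) n"
  proof (rule eq_matI)
    fix i j assume i: "i < dim_row (S (iv q) (\<lambda>j. D $$ (j,j)) n)" and j: "j < dim_col (S (iv q) (\<lambda>j. D $$ (j,j)) n)"
    have r: "iv q i < n" using permutes_in_image[OF qi] i by auto
    have "(Q * D) $$ (i,j) = D $$ (iv q i, j)" unfolding QS using i j
      by (subst S_mult_left[OF qi Dc]) auto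
    also have "\<dots> = S (iv q) (\<lambda>j. D $$ (j,j)) n $$ (i,j)"
      using Dd Dc i j r unfolding diagonal_mat_def S_def by auto
    finally show "(Q * D) $$ (i,j) = S (iv q) (\<lambda>j. D $$ (j,j)) n $$ (i,j)" .
  qed (use Dc QS in auto)
  then show ?thesis using qi Dp by (intro exI[of _ "iv q"] exI[of _ "\<lambda>j. D $$ (j,j)"]) auto
qed

lemma scaled_Sform:
  assumes P: "P \<in> G_scaled L d"
  shows "\<exists>\<rho> c. Sform L d P \<rho> c \<and> (\<forall>l. (l = 0 \<or> L \<le> l) \<longrightarrow> \<rho> l = id \<and> c l = (\<lambda>_. 1))"
proof -
  have "\<forall>l. \<exists>\<rho> c. (l \<le> L \<longrightarrow> \<rho> permutes {..<d l} \<and> (\<forall>i<d l. 0 < c i) \<and> P l = S \<rho> c (d l))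
            \<and> ((l = 0 \<or> L \<le> l) \<longrightarrow> \<rho> = id \<and> c = (\<lambda>_. 1))"
  proof
    fix l
    show "\<exists>\<rho> c. (l \<le> L \<longrightarrow> \<rho> permutes {..<d l} \<and> (\<forall>i<d l. 0 < c i) \<and> P l = S \<rho> c (d l))
            \<and> ((l = 0 \<or> L \<le> l) \<longrightarrow> \<rho> = id \<and> c = (\<lambda>_. 1))"
    proof (cases "1 \<le> l \<and> l < L")
      case True
      then obtain Q D where "perm_matrix (d l) Q" "pos_diag_matrix (d l) D" "P l = Q * D"
        using P unfolding G_scaled_def by auto
      then show ?thesis using QD_S True by fastforce
    next
      case False
      then have "l = 0 \<or> L \<le> l" by auto
      moreover have "l \<le> L \<Longrightarrow> P l = S id (\<lambda>_. 1) (d l)"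
        using P calculation unfolding G_scaled_def G_lin_def one_S[symmetric] by auto
      ultimately show ?thesis by (intro exI[of _ id] exI[of _ "\<lambda>_. 1"]) (auto simp: permutes_id)
    qed
  qed
  then obtain \<rho> where "\<forall>l. \<exists>c. (l \<le> L \<longrightarrow> \<rho> l permutes {..<d l} \<and> (\<forall>i<d l. 0 < c i) \<and> P l = S (\<rho> l) c (d l))
            \<and> ((l = 0 \<or> L \<le> l) \<longrightarrow> \<rho> l = id \<and> c = (\<lambda>_. 1))" by metis
  then obtain c where "\<forall>l. (l \<le> L \<longrightarrow> \<rho> l permutes {..<d l} \<and> (\<forall>i<d l. 0 < c l i) \<and> P l = S (\<rho> l) (c l) (d l))
            \<and> ((l = 0 \<or> L \<le> l) \<longrightarrow> \<rho> l = id \<and> c l = (\<lambda>_. 1))" by metis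
  then show ?thesis unfolding Sform_def by blast
qed

lemma Pm_scaled:
  assumes cp: "\<forall>l\<le>L. \<forall>i<d l. cm l i > 0" and cb: "\<forall>l. (l = 0 \<or> L \<le> l) \<longrightarrow> (\<forall>i. cm l i = 1)"
  shows "(\<lambda>l. S id (cm l) (d l)) \<in> G_scaled L d" "Sform L d (\<lambda>l. S id (cm l) (d l)) (\<lambda>_. id) cm"
proof -
  have b: "S id (cm l) (d l) = 1\<^sub>m (d l)" if "l = 0 \<or> L \<le> l" for l
    unfolding one_S using cb that by (intro S_cong) auto
  have m: "perm_matrix (d l) (S id (cm l) (d l)) \<or> True" for l by simp
  have r: "\<exists>Q D. perm_matrix (d l) Q \<and> pos_diag_matrix (d l) D \<and> S id (cm l) (d l) = Q * D"
    if l: "1 \<le> l" "l < L" for l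
  proof (intro exI conjI)
    show "perm_matrix (d l) (1\<^sub>m (d l))" unfolding one_S by (rule S_perm[OF permutes_id])
    show "pos_diag_matrix (d l) (S id (cm l) (d l))"
      unfolding pos_diag_matrix_def diagonal_mat_def using cp l by (auto simp: S_def)
    show "S id (cm l) (d l) = 1\<^sub>m (d l) * S id (cm l) (d l)" by simp
  qed
  show "(\<lambda>l. S id (cm l) (d l)) \<in> G_scaled L d"
    unfolding G_scaled_def G_lin_def using b r cp by (auto intro!: invertible_S permutes_id)
  show "Sform L d (\<lambda>l. S id (cm l) (d l)) (\<lambda>_. id) cm"
    unfolding Sform_def using cp by (auto intro: permutes_id)
qed

lemma Pp_perm:
  assumes t: "\<forall>l\<le>L. \<tau> l permutes {..<d l}" and tb: "\<forall>l. (l = 0 \<or> L \<le> l) \<longrightarrow> \<tau> l = id"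
  shows "(\<lambda>l. S (\<tau> l) (\<lambda>_. 1) (d l)) \<in> G_perm L d" "Sform L d (\<lambda>l. S (\<tau> l) (\<lambda>_. 1) (d l)) \<tau> (\<lambda>_ _. 1)"
proof -
  show "(\<lambda>l. S (\<tau> l) (\<lambda>_. 1) (d l)) \<in> G_perm L d"
    unfolding G_perm_def G_lin_def using t tb by (auto simp: one_S intro!: invertible_S S_perm)
  show "Sform L d (\<lambda>l. S (\<tau> l) (\<lambda>_. 1) (d l)) \<tau> (\<lambda>_ _. 1)"
    unfolding Sform_def using t by auto
qed


lemma act_L0: "rnn_act 0 P \<theta> = \<theta>"
proof -
  have "(\<lambda>l. if 1 \<le> l \<and> l \<le> (0::nat) then P l * Wrec \<theta> l * inv_mat (P l) else Wrec \<theta> l) = Wrec \<theta>" by auto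
  then show ?thesis unfolding rnn_act_def by simp
qed

theorem mainTheorem4:
  fixes L :: nat and d :: "nat \<Rightarrow> nat" and \<theta> \<theta>' \<theta>'' :: rnn_params
  assumes "rnn_wf L d \<theta>"
    and "\<forall>l<L. \<forall>i<d (Suc l). bias \<theta> l $ i \<noteq> 0"
    and "\<theta>' \<in> X_min L d \<theta>" and "\<theta>'' \<in> X_min L d \<theta>"
  shows "\<exists>P\<in>G_perm L d. \<theta>' = rnn_act L P \<theta>''"
proof -
  note wf = assms(1) and bnz = assms(2)
  obtain P1 where P1: "P1 \<in> G_scaled L d" "\<theta>' = rnn_act L P1 \<theta>"
    and min1: "\<forall>P\<in>G_scaled L d. rnn_norm L \<theta>' \<le> rnn_norm L (rnn_act L P \<theta>)"
    using assms(3) unfolding X_min_def by auto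
  obtain P2 where P2: "P2 \<in> G_scaled L d" "\<theta>'' = rnn_act L P2 \<theta>"
    and min2: "\<forall>P\<in>G_scaled L d. rnn_norm L \<theta>'' \<le> rnn_norm L (rnn_act L P \<theta>)"
    using assms(4) unfolding X_min_def by auto
  show ?thesis
  proof (cases "L = 0")
    case True
    have "(\<lambda>_. 1\<^sub>m (d 0)) \<in> G_perm L d" using True unfolding G_perm_def G_lin_def by auto
    moreover have "\<theta>' = rnn_act L (\<lambda>_. 1\<^sub>m (d 0)) \<theta>''" using True P1 P2 by (simp add: act_L0)
    ultimately show ?thesis by blast
  next
    case False
    then have L: "0 < L" by auto
    obtain \<rho>1 c1 where S1: "Sform L d P1 \<rho>1 c1" and b1: "\<forall>l. (l = 0 \<or> L \<le> l) \<longrightarrow> \<rho>1 l = id \<and> c1 l = (\<lambda>_. 1)"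
      using scaled_Sform[OF P1(1)] by blast
    obtain \<rho>2 c2 where S2: "Sform L d P2 \<rho>2 c2" and b2: "\<forall>l. (l = 0 \<or> L \<le> l) \<longrightarrow> \<rho>2 l = id \<and> c2 l = (\<lambda>_. 1)"
      using scaled_Sform[OF P2(1)] by blast
    have p1: "\<forall>l\<le>L. \<rho>1 l permutes {..<d l}" and cp1: "\<forall>l\<le>L. \<forall>i<d l. c1 l i > 0"
      using S1 unfolding Sform_def by auto
    have p2: "\<forall>l\<le>L. \<rho>2 l permutes {..<d l}" and cp2: "\<forall>l\<le>L. \<forall>i<d l. c2 l i > 0"
      using S2 unfolding Sform_def by auto
    have t1: "\<theta>' = sact L d \<rho>1 c1 \<theta>" using P1(2) act_eq[OF S1 wf] by simp
    have t2: "\<theta>'' = sact L d \<rho>2 c2 \<theta>" using P2(2) act_eq[OF S2 wf] by simp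
    define cm where "cm = (\<lambda>l i. sqrt (c1 l i * c2 l i))"
    have cmp: "\<forall>l\<le>L. \<forall>i<d l. cm l i > 0" using cp1 cp2 unfolding cm_def by auto
    have cmb: "\<forall>l. (l = 0 \<or> L \<le> l) \<longrightarrow> (\<forall>i. cm l i = 1)" using b1 b2 unfolding cm_def by auto
    note Pm = Pm_scaled[OF cmp cmb]
    have nm: "rnn_norm L (rnn_act L (\<lambda>l. S id (cm l) (d l)) \<theta>) = sqrt (F L d \<theta> cm)"
      using act_eq[OF Pm(2) wf] norm_sact[OF L] by (simp add: permutes_id)
    have F1: "F L d \<theta> c1 \<le> F L d \<theta> cm"
      using min1 Pm(1) nm norm_sact[OF L p1] t1 by fastforce
    have F2: "F L d \<theta> c2 \<le> F L d \<theta> cm"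
      using min2 Pm(1) nm norm_sact[OF L p2] t2 by fastforce
    have mid: "F L d \<theta> c1 + F L d \<theta> c2 - 2 * F L d \<theta> cm \<ge>
     (\<Sum>l\<in>{0<..<L}. vs (d l) (\<lambda>i. c1 l i * bias \<theta> (l-1) $ i - c2 l i * bias \<theta> (l-1) $ i))"
      using F_mid[OF L cp1 cp2] unfolding cm_def .
    have z: "(\<Sum>l\<in>{0<..<L}. vs (d l) (\<lambda>i. c1 l i * bias \<theta> (l-1) $ i - c2 l i * bias \<theta> (l-1) $ i)) = 0"
      using mid F1 F2 sum_nonneg[of "{0<..<L}" "\<lambda>l. vs (d l) (\<lambda>i. c1 l i * bias \<theta> (l-1) $ i - c2 l i * bias \<theta> (l-1) $ i)"] vs_nonneg
      by (smt (verit))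
    have ceq: "\<forall>l\<le>L. \<forall>i<d l. c1 l i = c2 l i"
    proof (intro allI impI)
      fix l i assume l: "l \<le> L" and i: "i < d l"
      show "c1 l i = c2 l i"
      proof (cases "l = 0 \<or> L \<le> l")
        case True then show ?thesis using b1 b2 by auto
      next
        case False
        then have lr: "l \<in> {0<..<L}" using l by auto
        have "vs (d l) (\<lambda>i. c1 l i * bias \<theta> (l-1) $ i - c2 l i * bias \<theta> (l-1) $ i) = 0"
          using z lr sum_nonneg_eq_0_iff[of "{0<..<L}" "\<lambda>l. vs (d l) (\<lambda>i. c1 l i * bias \<theta> (l-1) $ i - c2 l i * bias \<theta> (l-1) $ i)"] vs_nonneg
          by auto
        then have "(c1 l i * bias \<theta> (l-1) $ i - c2 l i * bias \<theta> (l-1) $ i)\<^sup>2 = 0"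
          unfolding vs_def using i by (subst (asm) sum_nonneg_eq_0_iff) auto
        moreover have "bias \<theta> (l-1) $ i \<noteq> 0" using bnz lr i by (metis Suc_pred' diff_less greaterThanLessThan_iff less_numeral_extra(1) order_less_trans)
        ultimately show ?thesis by (simp add: right_diff_distrib[symmetric] mult.commute)
      qed
    qed
    define \<tau> where "\<tau> = (\<lambda>l. iv (\<rho>2 l) \<circ> \<rho>1 l)"
    have tp: "\<forall>l\<le>L. \<tau> l permutes {..<d l}"
      unfolding \<tau>_def using p1 p2 by (auto intro: permutes_compose permutes_inv)
    have tb: "\<forall>l. (l = 0 \<or> L \<le> l) \<longrightarrow> \<tau> l = id" unfolding \<tau>_def using b1 b2 by (auto simp: inv_id)
    note Pp = Pp_perm[OF tp tb]
    have comp: "(\<lambda>l. \<rho>2 l \<circ> \<tau> l) = \<rho>1"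
    proof
      fix l show "\<rho>2 l \<circ> \<tau> l = \<rho>1 l"
      proof (cases "l \<le> L")
        case True
        have "\<rho>2 l permutes {..<d l}" using p2 True by auto
        then show ?thesis unfolding \<tau>_def by (auto simp: permutes_inverses)
      next
        case False then show ?thesis unfolding \<tau>_def using b1 b2 by (auto simp: inv_id)
      qed
    qed
    have "rnn_act L (\<lambda>l. S (\<tau> l) (\<lambda>_. 1) (d l)) \<theta>'' = sact L d \<tau> (\<lambda>_ _. 1) \<theta>''"
      using act_eq[OF Pp(2)] t2 wf_sact by metis
    also have "\<dots> = sact L d \<rho>1 c2 \<theta>" unfolding t2 sact_comp[OF tp] comp ..
    also have "\<dots> = sact L d \<rho>1 c1 \<theta>" using sact_cong[OF p1] ceq by metis
    finally show ?thesis using t1 Pp(1) by metis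
  qed
qed

end
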